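(* Let $\varepsilon>0$, $\Omega\subset\mathbb{R}^2$ bounded open, $u\in\mathcal{SF}_\varepsilon(\Omega)$, $R\in\mathcal{R}_\varepsilon(u)$, and let $S_R(u)\subseteq\mathbb{S}^2$ be an admissible interpolation surface for $u$ in $R$. Then there exists $u_R\in\mathbb{S}^2$ such that $u_R\in S_R(u)$ and $u_R\cdot z\ge0$ for every $z\in S_R(u)$.
   Context: $\mathcal{L}=\{ae_1+b\hat e_2:a,b\in\mathbb{Z}\}$ with $e_1=(1,0)$, $\hat e_2=\frac12(1,\sqrt3)$, $\mathcal{L}_\varepsilon=\varepsilon\mathcal{L}$, $\mathcal{L}_\varepsilon(R)=\mathcal{L}_\varepsilon\cap R$; $\mathcal{T}_\varepsilon$ is the set of closed triangles with vertices in $\mathcal{L}_\varepsilon$ pairwise at distance $\varepsilon$; $\mathcal{E}_\varepsilon$ the set of segments $[i,j]$, $i,j\in\mathcal{L}_\varepsilon$, $|i-j|=\varepsilon$. $n=(0,0,1)$; $\mathcal{SF}_\varepsilon(\Omega)$ is the set of $u:\mathcal{L}_\varepsilon\to\mathbb{S}^2$ with $u=n$ on $\mathcal{L}_\varepsilon\setminus\Omega$. $\mathcal{N}_\varepsilon(u)=\{[i,j]\in\mathcal{E}_\varepsilon:u(i)=-u(j)\}$. Two triangles of $\mathcal{T}_\varepsilon$ are neighbours if their intersection is an edge in $\mathcal{N}_\varepsilon(u)$, connected if joined by a finite chain of neighbours; $\mathcal{R}_\varepsilon(u)$ is the set of unions of pairwise connected triangles maximal under inclusion. $\mathrm{cone}_R(u)=\{\sum_{w\in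 u(\mathcal{L}_\varepsilon(R))}\lambda_ww:\lambda_w\ge0\}$. $S_R(u)$ is an admissible interpolation surface for $u$ in $R$ if: when $\mathrm{cone}_R(u)$ is not a linear subspace of $\mathbb{R}^3$, $S_R(u)=\{v/|v|:v=\sum_w\lambda_ww,\ \lambda_w\ge0,\ \sum_w\lambda_w>0\}$; when it is a linear subspace, $S_R(u)=\{v/|v|:v=\sum_w\lambda_ww+\tau h,\ \lambda_w,\tau\ge0,\ \sum_w\lambda_w+\tau>0\}$ for some $h\in\mathbb{S}^2$ orthogonal to $\mathrm{cone}_R(u)$ (sums over $w\in u(\mathcal{L}_\varepsilon(R))$). *)

theory Defs
  imports "HOL-Analysis.Analysis"
begin

definition e1 :: "real^2" where "e1 = vector [1, 0]"
definition e2hat :: "real^2" where "e2hat = vector [1/2, sqrt 3 / 2]"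
definition nvec :: "real^3" where "nvec = vector [0, 0, 1]"

definition Leps :: "real \<Rightarrow> (real^2) set" where
  "Leps \<epsilon> = {\<epsilon> *\<^sub>R (of_int a *\<^sub>R e1 + of_int b *\<^sub>R e2hat) | a b :: int. True}"

definition Leps_in :: "real \<Rightarrow> (real^2) set \<Rightarrow> (real^2) set" where
  "Leps_in \<epsilon> R = Leps \<epsilon> \<inter> R"

definition Teps :: "real \<Rightarrow> (real^2) set set" where
  "Teps \<epsilon> = {convex hull {i, j, k} | i j k. i \<in> Leps \<epsilon> \<and> j \<in> Leps \<epsilon> \<and> k \<in> Leps \<epsilon>
      \<and> dist i j = \<epsilon> \<and> dist j k = \<epsilon> \<and> dist i k = \<epsilon>}"

definition Eeps :: "real \<Rightarrow> (real^2) set set" where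
  "Eeps \<epsilon> = {closed_segment i j | i j. i \<in> Leps \<epsilon> \<and> j \<in> Leps \<epsilon> \<and> dist i j = \<epsilon>}"

definition SF :: "real \<Rightarrow> (real^2) set \<Rightarrow> ((real^2) \<Rightarrow> real^3) set" where
  "SF \<epsilon> \<Omega> = {u. (\<forall>i\<in>Leps \<epsilon>. u i \<in> sphere 0 1) \<and> (\<forall>i\<in>Leps \<epsilon> - \<Omega>. u i = nvec)}"

definition Neps :: "real \<Rightarrow> ((real^2) \<Rightarrow> real^3) \<Rightarrow> (real^2) set set" where
  "Neps \<epsilon> u = {closed_segment i j | i j. i \<in> Leps \<epsilon> \<and> j \<in> Leps \<epsilon> \<and> dist i j = \<epsilon>
      \<and> u i = - u j}"

definition neighbours :: "real \<Rightarrow> ((real^2) \<Rightarrow> real^3) \<Rightarrow> (real^2) set \<Rightarrow> (real^2) set \<Rightarrow> bool" where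
  "neighbours \<epsilon> u T1 T2 \<longleftrightarrow> T1 \<in> Teps \<epsilon> \<and> T2 \<in> Teps \<epsilon> \<and> T1 \<inter> T2 \<in> Neps \<epsilon> u"

definition tri_connected :: "real \<Rightarrow> ((real^2) \<Rightarrow> real^3) \<Rightarrow> (real^2) set \<Rightarrow> (real^2) set \<Rightarrow> bool" where
  "tri_connected \<epsilon> u T1 T2 \<longleftrightarrow> (neighbours \<epsilon> u)\<^sup>*\<^sup>* T1 T2"

definition conn_unions :: "real \<Rightarrow> ((real^2) \<Rightarrow> real^3) \<Rightarrow> (real^2) set set" where
  "conn_unions \<epsilon> u = {\<Union>C | C. C \<subseteq> Teps \<epsilon> \<and> (\<forall>T1\<in>C. \<forall>T2\<in>C. tri_connected \<epsilon> u T1 T2)}"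

definition Regions :: "real \<Rightarrow> ((real^2) \<Rightarrow> real^3) \<Rightarrow> (real^2) set set" where
  "Regions \<epsilon> u = {R \<in> conn_unions \<epsilon> u. \<forall>R'\<in>conn_unions \<epsilon> u. R \<subseteq> R' \<longrightarrow> R' = R}"

definition vals :: "real \<Rightarrow> ((real^2) \<Rightarrow> real^3) \<Rightarrow> (real^2) set \<Rightarrow> (real^3) set" where
  "vals \<epsilon> u R = u ` Leps_in \<epsilon> R"

definition cone_R :: "real \<Rightarrow> ((real^2) \<Rightarrow> real^3) \<Rightarrow> (real^2) set \<Rightarrow> (real^3) set" where
  "cone_R \<epsilon> u R = {(\<Sum>w\<in>F. l w *\<^sub>R w) | F l. F \<subseteq> vals \<epsilon> u R \<and> finite F \<and> (\<forall>w\<in>F. l w \<ge> 0)}"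

definition admissible_surface ::
  "real \<Rightarrow> ((real^2) \<Rightarrow> real^3) \<Rightarrow> (real^2) set \<Rightarrow> (real^3) set \<Rightarrow> bool" where
  "admissible_surface \<epsilon> u R S \<longleftrightarrow>
    (\<not> subspace (cone_R \<epsilon> u R) \<longrightarrow>
       S = {v /\<^sub>R norm v | v. \<exists>F l. F \<subseteq> vals \<epsilon> u R \<and> finite F \<and> (\<forall>w\<in>F. l w \<ge> 0)
              \<and> (\<Sum>w\<in>F. l w) > 0 \<and> v = (\<Sum>w\<in>F. l w *\<^sub>R w) \<and> v \<noteq> 0}) \<and>
    (subspace (cone_R \<epsilon> u R) \<longrightarrow>
       (\<exists>h. norm h = 1 \<and> (\<forall>c\<in>cone_R \<epsilon> u R. inner h c = 0) \<and>
          S = {v /\<^sub>R norm v | v. \<exists>F l \<tau>. F \<subseteq> vals \<epsilon> u R \<and> finite F \<and> (\<forall>w\<in>F. l w \<ge> 0)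
              \<and> \<tau> \<ge> 0 \<and> (\<Sum>w\<in>F. l w) + \<tau> > 0 \<and> v = (\<Sum>w\<in>F. l w *\<^sub>R w) + \<tau> *\<^sub>R h \<and> v \<noteq> 0}))"

end

theory Submission
  imports Defs
begin


definition coneset :: "'a::euclidean_space set \<Rightarrow> 'a set" where
  "coneset V = {(\<Sum>w\<in>F. l w *\<^sub>R w) | F l. F \<subseteq> V \<and> finite F \<and> (\<forall>w\<in>F. l w \<ge> 0)}"

lemma coneset_sub: "coneset V \<subseteq> convex_cone hull V"
proof
  fix x assume "x \<in> coneset V"
  then obtain F l where F: "F \<subseteq> V" "finite F" "\<forall>w\<in>F. l w \<ge> 0" and x: "x = (\<Sum>w\<in>F. l w *\<^sub>R w)"
    unfolding coneset_def by blast
  have "F \<subseteq> V \<longrightarrow> (\<forall>w\<in>F. l w \<ge> 0) \<longrightarrow> (\<Sum>w\<in>F. l w *\<^sub>R w) \<in> convex_cone hull V"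
    using F(2)
  proof (induction F rule: finite_induct)
    case empty then show ?case by (simp add: convex_cone_hull_contains_0)
  next
    case (insert y F)
    then show ?case
    proof (intro impI)
      assume h: "insert y F \<subseteq> V" "\<forall>w\<in>insert y F. 0 \<le> l w"
      have "(\<Sum>w\<in>F. l w *\<^sub>R w) \<in> convex_cone hull V" using insert h by auto
      moreover have "l y *\<^sub>R y \<in> convex_cone hull V"
        using h by (intro convex_cone_hull_mul hull_inc) auto
      ultimately show "(\<Sum>w\<in>insert y F. l w *\<^sub>R w) \<in> convex_cone hull V"
        using insert by (simp add: convex_cone_hull_add)
    qed
  qed
  then show "x \<in> convex_cone hull V" using F x by blast
qed

lemma coneset_cc: "convex_cone (coneset V)"
  unfolding convex_cone_iff
proof (intro conjI ballI allI impI)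
  show "0 \<in> coneset V" unfolding coneset_def
    by (rule CollectI, rule exI[of _ "{}"], auto)
next
  fix x y assume "x \<in> coneset V" "y \<in> coneset V"
  then obtain F l G m where F: "F \<subseteq> V" "finite F" "\<forall>w\<in>F. l w \<ge> 0" and x: "x = (\<Sum>w\<in>F. l w *\<^sub>R w)"
    and G: "G \<subseteq> V" "finite G" "\<forall>w\<in>G. m w \<ge> 0" and y: "y = (\<Sum>w\<in>G. m w *\<^sub>R w)"
    unfolding coneset_def by blast
  define n where "n w = (if w \<in> F then l w else 0) + (if w \<in> G then m w else 0)" for w
  have 1: "(\<Sum>w\<in>F\<union>G. (if w \<in> F then l w else 0) *\<^sub>R w) = x"
    unfolding x by (rule sum.mono_neutral_cong_right) (use F G in auto)
  have 2: "(\<Sum>w\<in>F\<union>G. (if w \<in> G then m w else 0) *\<^sub>R w) = y"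
    unfolding y by (rule sum.mono_neutral_cong_right) (use F G in auto)
  have "x + y = (\<Sum>w\<in>F\<union>G. n w *\<^sub>R w)"
    unfolding n_def scaleR_add_left sum.distrib 1 2 ..
  moreover have "\<forall>w\<in>F\<union>G. n w \<ge> 0" using F G by (auto simp: n_def)
  ultimately show "x + y \<in> coneset V" unfolding coneset_def using F G by blast
next
  fix x and c :: real assume "x \<in> coneset V" "c \<ge> 0"
  then obtain F l where F: "F \<subseteq> V" "finite F" "\<forall>w\<in>F. l w \<ge> 0" and x: "x = (\<Sum>w\<in>F. l w *\<^sub>R w)"
    unfolding coneset_def by blast
  have "c *\<^sub>R x = (\<Sum>w\<in>F. (c * l w) *\<^sub>R w)" unfolding x scaleR_sum_right by simp
  moreover have "\<forall>w\<in>F. c * l w \<ge> 0" using F \<open>c \<ge> 0\<close> by auto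
  ultimately show "c *\<^sub>R x \<in> coneset V" unfolding coneset_def using F
    by (intro CollectI exI[of _ F] exI[of _ "\<lambda>w. c * l w"]) auto
qed

lemma coneset_eq: "coneset V = convex_cone hull V"
proof
  show "convex_cone hull V \<subseteq> coneset V"
  proof (rule hull_minimal[where S=convex_cone, OF _ coneset_cc])
    show "V \<subseteq> coneset V"
    proof
      fix v assume "v \<in> V"
      then show "v \<in> coneset V" unfolding coneset_def
        by (intro CollectI exI[of _ "{v}"] exI[of _ "\<lambda>_. 1::real"]) auto
    qed
  qed
qed (rule coneset_sub)

lemma cone_main:
  fixes V :: "'a::euclidean_space set"
  assumes fin: "finite V" and ns: "\<not> subspace (coneset V)"
  shows "\<exists>q\<in>coneset V. q \<noteq> 0 \<and> (\<forall>w\<in>V. inner q w \<ge> 0)"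
proof -
  let ?K = "coneset V"
  have cc: "convex_cone ?K" by (rule coneset_cc)
  have Vne: "V \<noteq> {}"
  proof
    assume "V = {}"
    then have "?K = {0}" by (simp add: coneset_eq)
    then show False using ns by simp
  qed
  have cl: "closed ?K"
    unfolding coneset_eq convex_cone_hull_separate_nonempty[OF Vne]
    by (rule closed_conic_hull_strong) (use fin in \<open>auto simp: polytope_def\<close>)
  have cv: "convex ?K" using cc unfolding convex_cone_def by blast
  obtain k where k: "k \<in> ?K" "- k \<notin> ?K"
    using ns cc subspace_convex_cone_symmetric by blast
  obtain a b where ab: "inner a (-k) < b" "\<forall>x\<in>?K. inner a x > b"
    using separating_hyperplane_closed_point[OF cv cl k(2)] by blast
  have b0: "b < 0" using ab(2) convex_cone_contains_0[OF cc] by (metis inner_zero_right)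
  have apos: "inner a x \<ge> 0" if "x \<in> ?K" for x
  proof (rule ccontr)
    assume neg: "\<not> inner a x \<ge> 0"
    define t where "t = b / inner a x + 1"
    have t0: "t \<ge> 0" using neg b0 by (simp add: t_def divide_nonpos_neg add_nonneg_nonneg)
    have "t *\<^sub>R x \<in> ?K" using convex_cone_scaleR[OF cc t0 that] .
    then have "inner a (t *\<^sub>R x) > b" using ab(2) by blast
    moreover have "inner a (t *\<^sub>R x) = b + inner a x" using neg by (simp add: t_def field_simps)
    ultimately show False using neg by simp
  qed
  have ak: "inner a k > 0" using ab(1) b0 by simp
  define q where "q = closest_point ?K a"
  have Kne: "?K \<noteq> {}" using k by blast
  have qK: "q \<in> ?K" using closest_point_exists[OF cl Kne] q_def by blast
  have qmin: "\<forall>z\<in>?K. dist a q \<le> dist a z" using closest_point_exists[OF cl Kne] q_def by blast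
  have dot: "inner (a - q) (y - q) \<le> 0" if "y \<in> ?K" for y
    by (rule any_closest_point_dot[OF cv cl qK that qmin])
  have d1: "inner (a - q) (0 - q) \<le> 0" using dot convex_cone_contains_0[OF cc] by blast
  have d2: "inner (a - q) (2 *\<^sub>R q - q) \<le> 0" using dot convex_cone_scaleR[OF cc _ qK, of 2] by simp
  have orth: "inner (a - q) q = 0" using d1 d2 by (simp add: inner_diff_right algebra_simps)
  have Vsub: "V \<subseteq> ?K" unfolding coneset_eq by (rule hull_subset)
  have "inner q w \<ge> 0" if "w \<in> V" for w
  proof -
    have "q + w \<in> ?K" using convex_cone_add[OF cc qK] Vsub that by blast
    then have "inner (a - q) w \<le> 0" using dot[of "q + w"] by simp
    moreover have "inner a w \<ge> 0" using apos Vsub that by blast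
    ultimately show ?thesis by (simp add: inner_diff_left)
  qed
  moreover have "q \<noteq> 0"
  proof
    assume "q = 0"
    then have "inner a k \<le> 0" using dot[OF k(1)] by simp
    then show False using ak by simp
  qed
  ultimately show ?thesis using qK by blast
qed



lemma lattice_finite:
  assumes "\<epsilon> > 0"
  shows "finite (Leps \<epsilon> \<inter> cball 0 M)"
proof -
  define N where "N = \<lceil>2 * M / \<epsilon>\<rceil>"
  define f where "f = (\<lambda>(a::int, b::int). \<epsilon> *\<^sub>R (of_int a *\<^sub>R e1 + of_int b *\<^sub>R e2hat))"
  have "Leps \<epsilon> \<inter> cball 0 M \<subseteq> f ` ({-N..N} \<times> {-N..N})"
  proof
    fix p assume p: "p \<in> Leps \<epsilon> \<inter> cball 0 M"
    then obtain a b :: int where pab: "p = \<epsilon> *\<^sub>R (of_int a *\<^sub>R e1 + of_int b *\<^sub>R e2hat)"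
      unfolding Leps_def by blast
    have p1: "p $ 1 = \<epsilon> * (a + b / 2)" and p2: "p $ 2 = \<epsilon> * (b * (sqrt 3 / 2))"
      unfolding pab e1_def e2hat_def by (simp_all add: algebra_simps)
    have np: "norm p \<le> M" using p by simp
    have "\<bar>p $ 1\<bar> \<le> M" "\<bar>p $ 2\<bar> \<le> M" using component_le_norm_cart[of p] np by (meson order_trans)+
    then have h1: "\<epsilon> * \<bar>a + b / 2\<bar> \<le> M" and h2: "\<epsilon> * (\<bar>b\<bar> * (sqrt 3 / 2)) \<le> M"
      unfolding p1 p2 using assms by (simp_all add: abs_mult)
    have s3: "sqrt 3 / 2 \<ge> 1/2" by (simp add: real_le_rsqrt)
    have "\<epsilon> * (\<bar>b\<bar> * (1/2)) \<le> \<epsilon> * (\<bar>b\<bar> * (sqrt 3 / 2))"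
      using assms s3 by (intro mult_left_mono) (auto intro: mult_left_mono)
    then have hb: "\<epsilon> * \<bar>b\<bar> \<le> 2 * M" using h2 by linarith
    have "\<bar>real_of_int a\<bar> \<le> \<bar>a + b / 2\<bar> + \<bar>b\<bar> / 2" by linarith
    then have "\<epsilon> * \<bar>real_of_int a\<bar> \<le> \<epsilon> * \<bar>a + b / 2\<bar> + \<epsilon> * \<bar>b\<bar> / 2"
      using assms by (metis (no_types, lifting) add_divide_distrib distrib_left mult_left_mono less_imp_le times_divide_eq_right)
    then have ha: "\<epsilon> * \<bar>real_of_int a\<bar> \<le> 2 * M" using h1 hb by linarith
    have "\<bar>real_of_int a\<bar> \<le> 2 * M / \<epsilon>" "\<bar>real_of_int b\<bar> \<le> 2 * M / \<epsilon>"
      using ha hb assms by (simp_all add: pos_le_divide_eq mult.commute)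
    moreover have "2 * M / \<epsilon> \<le> real_of_int N" unfolding N_def by (rule le_of_int_ceiling)
    ultimately have "real_of_int \<bar>a\<bar> \<le> real_of_int N" "real_of_int \<bar>b\<bar> \<le> real_of_int N" by simp_all
    then have "\<bar>a\<bar> \<le> N" "\<bar>b\<bar> \<le> N" by (simp_all only: of_int_le_iff)
    then have "(a, b) \<in> {-N..N} \<times> {-N..N}" by auto
    then show "p \<in> f ` ({-N..N} \<times> {-N..N})" unfolding f_def pab by force
  qed
  then show ?thesis by (rule finite_subset) auto
qed



lemma tri_ball:
  assumes "T \<in> Teps \<epsilon>" "p \<in> T"
  shows "T \<subseteq> cball p (2 * \<epsilon>)"
proof -
  obtain i j k where T: "T = convex hull {i, j, k}" and d: "dist i j = \<epsilon>" "dist j k = \<epsilon>" "dist i k = \<epsilon>"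
    using assms(1) unfolding Teps_def by blast
  have e0: "\<epsilon> \<ge> 0" using d(1) by auto
  have "{i, j, k} \<subseteq> cball i \<epsilon>" using d e0 by auto
  then have Ti: "T \<subseteq> cball i \<epsilon>" unfolding T by (rule hull_minimal) (rule convex_cball)
  show ?thesis
  proof
    fix x assume "x \<in> T"
    then have "dist i x \<le> \<epsilon>" "dist i p \<le> \<epsilon>" using Ti assms(2) by auto
    then have "dist p x \<le> 2 * \<epsilon>" using dist_triangle[of p x i] by (simp add: dist_commute)
    then show "x \<in> cball p (2 * \<epsilon>)" by simp
  qed
qed

lemma tri_nonempty_ball:
  assumes "T \<in> Teps \<epsilon>"
  shows "\<exists>p. T \<subseteq> cball p (2 * \<epsilon>)"
proof (cases "T = {}")
  case True then show ?thesis by auto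
next
  case False
  then obtain p where "p \<in> T" by blast
  then show ?thesis using tri_ball[OF assms] by blast
qed

lemma region_bounded:
  assumes "u \<in> SF \<epsilon> \<Omega>" "R \<in> Regions \<epsilon> u" "bounded \<Omega>"
  shows "bounded R"
proof -
  obtain C where C: "R = \<Union>C" "C \<subseteq> Teps \<epsilon>" and conn: "\<forall>T1\<in>C. \<forall>T2\<in>C. tri_connected \<epsilon> u T1 T2"
  proof -
    have "R \<in> conn_unions \<epsilon> u" using assms(2) unfolding Regions_def by simp
    then show ?thesis using that unfolding conn_unions_def mem_Collect_eq by (elim exE conjE) simp
  qed
  obtain M where M: "\<forall>x\<in>\<Omega>. norm x \<le> M" using assms(3) bounded_iff by blast
  show ?thesis
  proof (cases "\<exists>T1\<in>C. \<exists>T2\<in>C. T1 \<noteq> T2")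
    case True
    then obtain T1 T2 where T12: "T1 \<in> C" "T2 \<in> C" "T1 \<noteq> T2" by blast
    have "T \<subseteq> cball 0 (M + 2 * \<epsilon>)" if TC: "T \<in> C" for T
    proof -
      obtain T' where T': "T' \<in> C" "T' \<noteq> T"
      proof (cases "T = T1")
        case True then show ?thesis using that T12 by blast
      next
        case False then show ?thesis using that T12 by blast
      qed
      have "(neighbours \<epsilon> u)\<^sup>*\<^sup>* T T'" using conn TC T' unfolding tri_connected_def by blast
      then obtain T'' where "neighbours \<epsilon> u T T''"
        using T'(2) by (cases rule: converse_rtranclpE) auto
      then have "T \<inter> T'' \<in> Neps \<epsilon> u" unfolding neighbours_def by blast
      then obtain i j where ij: "T \<inter> T'' = closed_segment i j" "i \<in> Leps \<epsilon>" "j \<in> Leps \<epsilon>" "u i = - u j"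
        unfolding Neps_def mem_Collect_eq by (elim exE conjE) simp
      have ui: "norm (u i) = 1" using assms(1) ij(2) unfolding SF_def by auto
      have "i \<in> \<Omega> \<or> j \<in> \<Omega>"
      proof (rule ccontr)
        assume "\<not> (i \<in> \<Omega> \<or> j \<in> \<Omega>)"
        then have "u i = nvec" "u j = nvec" using assms(1) ij(2,3) unfolding SF_def by auto
        then have "nvec = - nvec" using ij(4) by simp
        then have "nvec $ 3 = - (nvec $ 3)" by (metis vector_uminus_component)
        then show False by (simp add: nvec_def)
      qed
      moreover have "i \<in> T" "j \<in> T" using ij(1) ends_in_segment by blast+
      ultimately obtain p where p: "p \<in> \<Omega>" "p \<in> T" by blast
      have "T \<subseteq> cball p (2 * \<epsilon>)" using tri_ball TC C(2) p(2) by blast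
      moreover have "cball p (2 * \<epsilon>) \<subseteq> cball 0 (M + 2 * \<epsilon>)"
      proof
        fix x assume "x \<in> cball p (2 * \<epsilon>)"
        then have "dist p x \<le> 2 * \<epsilon>" by simp
        moreover have "norm p \<le> M" using M p by blast
        ultimately show "x \<in> cball 0 (M + 2 * \<epsilon>)"
          using norm_triangle_ineq[of p "x - p"] by (simp add: dist_norm norm_minus_commute)
      qed
      ultimately show ?thesis by blast
    qed
    then have "R \<subseteq> cball 0 (M + 2 * \<epsilon>)" using C(1) by blast
    then show ?thesis using bounded_cball bounded_subset by blast
  next
    case False
    show ?thesis
    proof (cases "C = {}")
      case True then show ?thesis using C(1) by simp
    next
      case ne: False
      then obtain T0 where T0: "T0 \<in> C" by blast
      then have "C = {T0}" using False by blast
      then have "R = T0" using C(1) by simp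
      moreover obtain p where "T0 \<subseteq> cball p (2 * \<epsilon>)" using tri_nonempty_ball T0 C(2) by blast
      ultimately show ?thesis using bounded_cball bounded_subset by blast
    qed
  qed
qed

lemma vals_finite:
  assumes "\<epsilon> > 0" "u \<in> SF \<epsilon> \<Omega>" "R \<in> Regions \<epsilon> u" "bounded \<Omega>"
  shows "finite (vals \<epsilon> u R)"
proof -
  have "\<exists>M. \<forall>x\<in>R. norm x \<le> M" using region_bounded[OF assms(2-4)] unfolding bounded_iff .
  then obtain M where M: "\<forall>x\<in>R. norm x \<le> M" ..
  then have "Leps_in \<epsilon> R \<subseteq> Leps \<epsilon> \<inter> cball 0 M" unfolding Leps_in_def by auto
  then have "finite (Leps_in \<epsilon> R)" using lattice_finite[OF assms(1), of M] by (rule finite_subset)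
  then show ?thesis unfolding vals_def by simp
qed

theorem lemmaB1:
  fixes \<epsilon> :: real and \<Omega> :: "(real^2) set" and u :: "real^2 \<Rightarrow> real^3"
    and R :: "(real^2) set" and S :: "(real^3) set"
  assumes "\<epsilon> > 0" and "bounded \<Omega>" and "open \<Omega>"
    and "u \<in> SF \<epsilon> \<Omega>" and "R \<in> Regions \<epsilon> u"
    and "S \<subseteq> sphere 0 1" and "admissible_surface \<epsilon> u R S"
  shows "\<exists>uR \<in> sphere 0 1. uR \<in> S \<and> (\<forall>z\<in>S. inner uR z \<ge> 0)"
proof -
  let ?V = "vals \<epsilon> u R"
  have Keq: "cone_R \<epsilon> u R = coneset ?V" unfolding cone_R_def coneset_def ..
  show ?thesis
  proof (cases "subspace (cone_R \<epsilon> u R)")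
    case True
    have "\<exists>h. norm h = 1 \<and> (\<forall>c\<in>cone_R \<epsilon> u R. inner h c = 0) \<and>
          S = {v /\<^sub>R norm v | v. \<exists>F l \<tau>. F \<subseteq> ?V \<and> finite F \<and> (\<forall>w\<in>F. l w \<ge> 0)
              \<and> \<tau> \<ge> 0 \<and> (\<Sum>w\<in>F. l w) + \<tau> > 0 \<and> v = (\<Sum>w\<in>F. l w *\<^sub>R w) + \<tau> *\<^sub>R h \<and> v \<noteq> 0}"
      using assms(7) True unfolding admissible_surface_def by simp
    then obtain h where hh: "norm h = 1 \<and> (\<forall>c\<in>cone_R \<epsilon> u R. inner h c = 0) \<and>
          S = {v /\<^sub>R norm v | v. \<exists>F l \<tau>. F \<subseteq> ?V \<and> finite F \<and> (\<forall>w\<in>F. l w \<ge> 0)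
              \<and> \<tau> \<ge> 0 \<and> (\<Sum>w\<in>F. l w) + \<tau> > 0 \<and> v = (\<Sum>w\<in>F. l w *\<^sub>R w) + \<tau> *\<^sub>R h \<and> v \<noteq> 0}" ..
    have h1: "norm h = 1" using hh by (rule conjunct1)
    have h2: "\<forall>c\<in>cone_R \<epsilon> u R. inner h c = 0" using hh by (elim conjE)
    have S: "S = {v /\<^sub>R norm v | v. \<exists>F l \<tau>. F \<subseteq> ?V \<and> finite F \<and> (\<forall>w\<in>F. l w \<ge> 0)
              \<and> \<tau> \<ge> 0 \<and> (\<Sum>w\<in>F. l w) + \<tau> > 0 \<and> v = (\<Sum>w\<in>F. l w *\<^sub>R w) + \<tau> *\<^sub>R h \<and> v \<noteq> 0}"
      using hh by (elim conjE)
    have hS: "h \<in> S" unfolding S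
      apply (rule CollectI, rule exI[of _ h], rule conjI)
      using h1 apply simp
      apply (rule exI[of _ "{}"], rule exI[of _ "\<lambda>_. 0"], rule exI[of _ "1::real"])
      using h1 by auto
    have nn: "inner h z \<ge> 0" if "z \<in> S" for z
    proof -
      have "\<exists>v. z = v /\<^sub>R norm v \<and> (\<exists>F l \<tau>. F \<subseteq> ?V \<and> finite F \<and> (\<forall>w\<in>F. l w \<ge> 0)
              \<and> \<tau> \<ge> 0 \<and> (\<Sum>w\<in>F. l w) + \<tau> > 0 \<and> v = (\<Sum>w\<in>F. l w *\<^sub>R w) + \<tau> *\<^sub>R h \<and> v \<noteq> 0)"
        using \<open>z \<in> S\<close> unfolding S mem_Collect_eq .
      then obtain v where zv: "z = v /\<^sub>R norm v \<and> (\<exists>F l \<tau>. F \<subseteq> ?V \<and> finite F \<and> (\<forall>w\<in>F. l w \<ge> 0)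
              \<and> \<tau> \<ge> 0 \<and> (\<Sum>w\<in>F. l w) + \<tau> > 0 \<and> v = (\<Sum>w\<in>F. l w *\<^sub>R w) + \<tau> *\<^sub>R h \<and> v \<noteq> 0)" ..
      have z: "z = v /\<^sub>R norm v" using zv by (rule conjunct1)
      have ex: "\<exists>F l \<tau>. F \<subseteq> ?V \<and> finite F \<and> (\<forall>w\<in>F. l w \<ge> 0)
              \<and> \<tau> \<ge> 0 \<and> (\<Sum>w\<in>F. l w) + \<tau> > 0 \<and> v = (\<Sum>w\<in>F. l w *\<^sub>R w) + \<tau> *\<^sub>R h \<and> v \<noteq> 0"
        using zv by (rule conjunct2)
      from ex obtain F l \<tau> where F: "F \<subseteq> ?V" "finite F" "\<forall>w\<in>F. l w \<ge> 0"
        and t: "\<tau> \<ge> 0" and v: "v = (\<Sum>w\<in>F. l w *\<^sub>R w) + \<tau> *\<^sub>R h"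
        by (elim exE conjE)
      have "(\<Sum>w\<in>F. l w *\<^sub>R w) \<in> cone_R \<epsilon> u R" unfolding cone_R_def
        by (rule CollectI, rule exI[of _ F], rule exI[of _ l]) (use F in simp)
      then have "inner h (\<Sum>w\<in>F. l w *\<^sub>R w) = 0" using h2 by (rule bspec[rotated])
      then have "inner h v = \<tau>" using h1 by (simp add: v inner_add_right dot_square_norm)
      then show ?thesis using t by (simp add: z)
    qed
    have sp: "h \<in> sphere 0 1" using h1 by simp
    show ?thesis
      by (rule bexI[OF _ sp], rule conjI[OF hS], rule ballI, rule nn)
  next
    case False
    then have S: "S = {v /\<^sub>R norm v | v. \<exists>F l. F \<subseteq> ?V \<and> finite F \<and> (\<forall>w\<in>F. l w \<ge> 0)
              \<and> (\<Sum>w\<in>F. l w) > 0 \<and> v = (\<Sum>w\<in>F. l w *\<^sub>R w) \<and> v \<noteq> 0}"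
      using assms(7) unfolding admissible_surface_def by simp
    have fin: "finite ?V" by (rule vals_finite[OF assms(1,4,5,2)])
    have "\<not> subspace (coneset ?V)" using False Keq by simp
    from cone_main[OF fin this] obtain q where q: "q \<in> coneset ?V" "q \<noteq> 0" "\<forall>w\<in>?V. inner q w \<ge> 0"
      by (elim bexE conjE)
    have "\<exists>F l. q = (\<Sum>w\<in>F. l w *\<^sub>R w) \<and> F \<subseteq> ?V \<and> finite F \<and> (\<forall>w\<in>F. l w \<ge> 0)"
      using q(1) unfolding coneset_def mem_Collect_eq .
    then obtain F l where F: "F \<subseteq> ?V" "finite F" "\<forall>w\<in>F. l w \<ge> 0" and qF: "q = (\<Sum>w\<in>F. l w *\<^sub>R w)"
      by (elim exE conjE)
    have pos: "(\<Sum>w\<in>F. l w) > 0"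
    proof (rule ccontr)
      assume "\<not> (\<Sum>w\<in>F. l w) > 0"
      moreover have "(\<Sum>w\<in>F. l w) \<ge> 0" using F(3) by (simp add: sum_nonneg)
      ultimately have "(\<Sum>w\<in>F. l w) = 0" by linarith
      moreover have "(sum l F = 0) = (\<forall>x\<in>F. l x = 0)"
        by (rule sum_nonneg_eq_0_iff[OF F(2)]) (use F(3) in auto)
      ultimately have "\<forall>w\<in>F. l w = 0" by simp
      then have "q = 0" unfolding qF by simp
      then show False using q(2) by simp
    qed
    have qS: "q /\<^sub>R norm q \<in> S" unfolding S
      apply (rule CollectI, rule exI[of _ q], rule conjI, rule refl)
      apply (rule exI[of _ F], rule exI[of _ l])
      using F qF q(2) pos by (intro conjI)
    have nn: "inner (q /\<^sub>R norm q) z \<ge> 0" if "z \<in> S" for z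
    proof -
      have "\<exists>v. z = v /\<^sub>R norm v \<and> (\<exists>F l. F \<subseteq> ?V \<and> finite F \<and> (\<forall>w\<in>F. l w \<ge> 0)
              \<and> (\<Sum>w\<in>F. l w) > 0 \<and> v = (\<Sum>w\<in>F. l w *\<^sub>R w) \<and> v \<noteq> 0)"
        using \<open>z \<in> S\<close> unfolding S mem_Collect_eq .
      then obtain v where zv: "z = v /\<^sub>R norm v \<and> (\<exists>F l. F \<subseteq> ?V \<and> finite F \<and> (\<forall>w\<in>F. l w \<ge> 0)
              \<and> (\<Sum>w\<in>F. l w) > 0 \<and> v = (\<Sum>w\<in>F. l w *\<^sub>R w) \<and> v \<noteq> 0)" ..
      have z: "z = v /\<^sub>R norm v" using zv by (rule conjunct1)
      have ex: "\<exists>F l. F \<subseteq> ?V \<and> finite F \<and> (\<forall>w\<in>F. l w \<ge> 0)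
              \<and> (\<Sum>w\<in>F. l w) > 0 \<and> v = (\<Sum>w\<in>F. l w *\<^sub>R w) \<and> v \<noteq> 0"
        using zv by (rule conjunct2)
      from ex obtain F' l' where F': "F' \<subseteq> ?V" "\<forall>w\<in>F'. l' w \<ge> 0"
        and v: "v = (\<Sum>w\<in>F'. l' w *\<^sub>R w)"
        by (elim exE conjE)
      have "inner q v = (\<Sum>w\<in>F'. l' w * inner q w)" unfolding v by (simp add: inner_sum_right)
      also have "\<dots> \<ge> 0" using F' q(3) by (intro sum_nonneg) auto
      finally have "inner q v \<ge> 0" .
      then show ?thesis by (simp add: z)
    qed
    have sp: "q /\<^sub>R norm q \<in> sphere 0 1" using q(2) by simp
    show ?thesis
      by (rule bexI[OF _ sp], rule conjI[OF qS], rule ballI, rule nn)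
  qed
qed

end
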